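(* Let $\boldsymbol{X}\in\mathcal{S}^{n\times n}$ have pairwise distinct eigenvalues, let $\delta'>0$, and let $\boldsymbol{X}=\boldsymbol{Q}_x\operatorname{Diag}(\boldsymbol{\lambda}(\boldsymbol{X}))\boldsymbol{Q}_x^\top$ with $\boldsymbol{Q}_x\in\mathcal{O}(n,n)$ be a spectral decomposition. Then there exists $\delta''>0$ such that $$\boldsymbol{B}(\boldsymbol{X},\delta'')\subset\boldsymbol{B}\big((\boldsymbol{Q}_x,\boldsymbol{\lambda}(\boldsymbol{X})),\delta'\big).$$
   Context: $\mathcal{S}^{n\times n}$ denotes the real symmetric $n\times n$ matrices, $\mathcal{O}(n,n)$ the real orthogonal $n\times n$ matrices, and $\boldsymbol{\lambda}(\boldsymbol{X})$ the vector of eigenvalues of $\boldsymbol{X}$ in nonincreasing order. Let $\mathbb{R}^n_{\geq}=\{\boldsymbol{x}\in\mathbb{R}^n: x_1\ge\cdots\ge x_n\}$. For $\boldsymbol{Q}\in\mathcal{O}(n,n)$, $\boldsymbol{\lambda}\in\mathbb{R}^n_\geq$ and $\delta>0$, $\boldsymbol{B}((\boldsymbol{Q},\boldsymbol{\lambda}),\delta):=\{\bar{\boldsymbol{Q}}\operatorname{Diag}(\bar{\boldsymbol{\lambda}})\bar{\boldsymbol{Q}}^\top : \|\bar{\boldsymbol{Q}}-\boldsymbol{Q}\|_F\le\delta,\ \|\bar{\boldsymbol{\lambda}}-\boldsymbol{\lambda}\|\le\delta,\ \bar{\boldsymbol{Q}}\in\mathcal{O}(n,n),\ \bar{\boldsymbol{\lambda}}\in\mathbb{R}^n_\geq\}$,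 and $\boldsymbol{B}(\boldsymbol{X},\delta):=\{\bar{\boldsymbol{X}}\in\mathcal{S}^{n\times n}:\|\bar{\boldsymbol{X}}-\boldsymbol{X}\|_F\le\delta\}$. *)

theory Defs
  imports "HOL-Analysis.Analysis"
begin

text \<open>Index type 'n is a finite linearly ordered type standing for {1..n}.
  Matrices are real^'n^'n, vectors real^'n.\<close>

definition frob_norm :: "real^'n^'n \<Rightarrow> real" where
  "frob_norm A = sqrt (\<Sum>i\<in>UNIV. \<Sum>j\<in>UNIV. (A$i$j)^2)"

definition Diag :: "real^'n \<Rightarrow> real^'n^'n" where
  "Diag v = (\<chi> i j. if i = j then v$i else 0)"

definition nonincr :: "real^'n::{finite,linorder} \<Rightarrow> bool" where
  "nonincr v \<longleftrightarrow> (\<forall>i j. i \<le> j \<longrightarrow> v$j \<le> v$i)"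

definition sym_mat :: "real^'n^'n \<Rightarrow> bool" where
  "sym_mat X \<longleftrightarrow> transpose X = X"

definition eigvals :: "real^('n::{finite,linorder})^('n::{finite,linorder}) \<Rightarrow> real^('n::{finite,linorder})" where
  "eigvals X = (THE l. nonincr l \<and>
      (\<forall>t::real. det (t *\<^sub>R mat 1 - X) = (\<Prod>i\<in>UNIV. t - l$i)))"

definition spec_ball :: "real^('n::{finite,linorder})^('n::{finite,linorder}) \<Rightarrow> real^('n::{finite,linorder}) \<Rightarrow> real \<Rightarrow> (real^('n::{finite,linorder})^('n::{finite,linorder})) set" where
  "spec_ball Q l d = {Qb ** Diag lb ** transpose Qb | Qb lb.
      frob_norm (Qb - Q) \<le> d \<and> norm (lb - l) \<le> d \<and> orthogonal_matrix Qb \<and> nonincr lb}"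

definition sym_ball :: "real^'n^'n \<Rightarrow> real \<Rightarrow> (real^'n^'n) set" where
  "sym_ball X d = {Xb. sym_mat Xb \<and> frob_norm (Xb - X) \<le> d}"

end

theory Submission
  imports Defs "HOL-Computational_Algebra.Polynomial"
begin


lemma order_lin_prod:
  fixes f :: "'a \<Rightarrow> real"
  assumes "finite A"
  shows "order b (\<Prod>i\<in>A. [:-(f i),1:]) = card {i\<in>A. f i = b}"
  using assms
proof (induction A rule: finite_induct)
  case empty
  then show ?case by simp
next
  case (insert x F)
  have nz: "(\<Prod>i\<in>F. [:-(f i),1:]) \<noteq> 0" by (simp add: insert.hyps(1))
  have nz1: "[:-(f x),1:] \<noteq> (0::real poly)" by simp
  have nz2: "[:-(f x),1:] * (\<Prod>i\<in>F. [:-(f i),1:]) \<noteq> 0" using nz nz1 by (simp only: mult_eq_0_iff) simp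
  have o1: "order b [:-(f x),1:] = (if f x = b then 1 else 0)"
  proof (cases "f x = b")
    case True
    then show ?thesis using order_power_n_n[of b 1] by simp
  next
    case False
    then have "poly [:-(f x),1:] b \<noteq> 0" by simp
    then show ?thesis using False order_0I by metis
  qed
  have "order b (\<Prod>i\<in>insert x F. [:-(f i),1:]) = order b ([:-(f x),1:] * (\<Prod>i\<in>F. [:-(f i),1:]))"
    using insert.hyps by simp
  also have "\<dots> = order b [:-(f x),1:] + card {i\<in>F. f i = b}"
    using order_mult[OF nz2] insert.IH by simp
  also have "\<dots> = card {i\<in>insert x F. f i = b}"
  proof (cases "f x = b")
    case True
    have "{i\<in>insert x F. f i = b} = insert x {i\<in>F. f i = b}" using True by auto
    then show ?thesis using True o1 insert.hyps by simp
  next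
    case False
    have "{i\<in>insert x F. f i = b} = {i\<in>F. f i = b}" using False by auto
    then show ?thesis using False o1 by simp
  qed
  finally show ?case .
qed

lemma counts_eq:
  fixes l l' :: "real^'n"
  assumes "\<forall>t. (\<Prod>i\<in>UNIV. t - l$i) = (\<Prod>i\<in>UNIV. t - l'$i)"
  shows "card {i. l$i = b} = card {i. l'$i = b}"
proof -
  define p where "p = (\<Prod>i\<in>UNIV. [:-(l$i),1:])"
  define p' where "p' = (\<Prod>i\<in>UNIV. [:-(l'$i),1:])"
  have "poly p = poly p'"
    using assms by (auto simp: p_def p'_def poly_prod)
  then have "p = p'" by (simp add: poly_eq_poly_eq_iff)
  then show ?thesis
    using order_lin_prod[of UNIV b "\<lambda>i. l$i"] order_lin_prod[of UNIV b "\<lambda>i. l'$i"]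
    by (simp add: p_def p'_def)
qed

lemma counts_aux:
  fixes l l' :: "real^'n::{finite,linorder}"
  assumes "nonincr l'" "\<forall>j<i. l$j = l'$j" "l'$i < l$i"
    and "\<forall>b. card {j. l$j = b} = card {j. l'$j = b}"
  shows False
proof -
  let ?b = "l$i"
  have "{j. l'$j = ?b} \<subseteq> {j. j<i \<and> l$j = ?b}"
  proof
    fix j assume "j \<in> {j. l'$j = ?b}"
    then have jb: "l'$j = ?b" by simp
    have "j < i"
    proof (rule ccontr)
      assume "\<not> j < i"
      then have "i \<le> j" by simp
      then have "l'$j \<le> l'$i" using assms(1) unfolding nonincr_def by blast
      then show False using jb assms(3) by simp
    qed
    then show "j \<in> {j. j<i \<and> l$j = ?b}" using jb assms(2) by simp
  qed
  moreover have "{j. j<i \<and> l$j = ?b} \<subset> {j. l$j = ?b}" by auto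
  ultimately have "card {j. l'$j = ?b} < card {j. l$j = ?b}"
    by (meson card_mono finite dual_order.strict_trans2 psubset_card_mono)
  then show False using assms(4) by simp
qed

lemma charpoly_unique:
  fixes l l' :: "real^'n::{finite,linorder}"
  assumes "nonincr l" "nonincr l'"
    "\<forall>t. (\<Prod>i\<in>UNIV. t - l$i) = (\<Prod>i\<in>UNIV. t - l'$i)"
  shows "l = l'"
proof (rule ccontr)
  assume ne: "l \<noteq> l'"
  define D where "D = {i. l$i \<noteq> l'$i}"
  have "D \<noteq> {}" using ne by (auto simp: D_def vec_eq_iff)
  define i where "i = Min D"
  have iD: "i \<in> D" using \<open>D \<noteq> {}\<close> by (simp add: i_def)
  have lt: "\<forall>j<i. l$j = l'$j"
    using Min_le[of D] \<open>D \<noteq> {}\<close> by (force simp: i_def D_def)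
  have cnt: "\<forall>b. card {j. l$j = b} = card {j. l'$j = b}"
    using counts_eq[OF assms(3)] by blast
  show False
  proof (cases "l'$i < l$i")
    case True
    then show ?thesis using counts_aux[OF assms(2) lt True cnt] by simp
  next
    case False
    then have "l$i < l'$i" using iD by (auto simp: D_def)
    then show ?thesis using counts_aux[OF assms(1), of i l'] lt cnt by simp
  qed
qed



lemma rank_bij:
  fixes r :: "'n::finite \<Rightarrow> nat"
  assumes "inj r" "\<forall>i. r i < CARD('n)"
  shows "bij_betw r UNIV {..<CARD('n)}"
proof -
  have "r ` UNIV \<subseteq> {..<CARD('n)}" using assms(2) by auto
  moreover have "card (r ` UNIV) = CARD('n)" using assms(1) by (simp add: card_image)
  ultimately have "r ` UNIV = {..<CARD('n)}"
    by (metis card_lessThan card_subset_eq finite_lessThan)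
  then show ?thesis using assms(1) by (simp add: bij_betw_def)
qed

lemma sort_exists:
  fixes lam :: "real^'n::{finite,linorder}"
  assumes inj: "\<forall>i j. i\<noteq>j \<longrightarrow> lam$i \<noteq> lam$j"
  shows "\<exists>\<sigma>. bij \<sigma> \<and> nonincr ((\<chi> i. lam$(\<sigma> i)) :: real^('n::{finite,linorder}))"
proof -
  define c where "c i = card {j. j < i}" for i :: 'n
  define r where "r k = card {m. lam$k < lam$m}" for k :: 'n
  have cmono: "c i < c j" if "i < j" for i j
    unfolding c_def using that by (intro psubset_card_mono) auto
  have rmono: "r k' < r k" if "lam$k < lam$k'" for k k'
    unfolding r_def using that by (intro psubset_card_mono) auto
  have cinj: "inj c"
    by (metis cmono injI less_irrefl linorder_neqE)
  have rinj: "inj r"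
  proof (rule injI)
    fix k k' assume "r k = r k'"
    then show "k = k'" using rmono inj by (metis less_irrefl linorder_neqE_linordered_idom)
  qed
  have cb: "\<forall>i. c i < CARD('n)"
  proof
    fix i :: 'n
    have "{j. j < i} \<subset> (UNIV::'n set)" by auto
    then show "c i < CARD('n)" unfolding c_def by (simp add: psubset_card_mono)
  qed
  have rb: "\<forall>k. r k < CARD('n)"
  proof
    fix k :: 'n
    have "{m. lam$k < lam$m} \<subset> (UNIV::'n set)" by auto
    then show "r k < CARD('n)" unfolding r_def by (simp add: psubset_card_mono)
  qed
  have bc: "bij_betw c UNIV {..<CARD('n)}" by (rule rank_bij[OF cinj cb])
  have br: "bij_betw r UNIV {..<CARD('n)}" by (rule rank_bij[OF rinj rb])
  define \<sigma> where "\<sigma> = inv_into UNIV r \<circ> c"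
  have bs: "bij \<sigma>"
    unfolding \<sigma>_def using bc bij_betw_inv_into[OF br] bij_betw_trans by blast
  have rs: "r (\<sigma> i) = c i" for i
  proof -
    have "c i \<in> range r" using bc br by (auto simp: bij_betw_def)
    then show ?thesis unfolding \<sigma>_def by (simp add: f_inv_into_f)
  qed
  have "nonincr ((\<chi> i. lam$(\<sigma> i)) :: (real,'n) vec)"
    unfolding nonincr_def
  proof (intro allI impI)
    fix i j :: 'n assume "i \<le> j"
    have "c i \<le> c j"
    proof (cases "i = j")
      case False
      then have "i < j" using \<open>i \<le> j\<close> by simp
      then show ?thesis using cmono[of i j] by simp
    qed simp
    then have "r (\<sigma> i) \<le> r (\<sigma> j)" by (simp add: rs)
    then have "\<not> lam$(\<sigma> i) < lam$(\<sigma> j)" using rmono[of "\<sigma> i" "\<sigma> j"] by linarith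
    then show "(\<chi> i. lam$(\<sigma> i))$j \<le> (\<chi> i. lam$(\<sigma> i))$i" by simp
  qed
  then show ?thesis using bs by (intro exI[of _ \<sigma>]) simp
qed

lemma eigvals_nonincr:
  fixes X :: "real^('n::{finite,linorder})^('n::{finite,linorder})"
  assumes d: "\<forall>i j. i \<noteq> j \<longrightarrow> eigvals X $ i \<noteq> eigvals X $ j"
    and cp: "\<forall>t. det (t *\<^sub>R mat 1 - X) = (\<Prod>i\<in>UNIV. t - eigvals X $ i)"
  shows "nonincr (eigvals X)"
proof -
  let ?lam = "eigvals X"
  define P where "P l = (nonincr l \<and> (\<forall>t::real. det (t *\<^sub>R mat 1 - X) = (\<Prod>i\<in>UNIV. t - l$i)))" for l :: "(real,'n) vec"
  obtain \<sigma> where bs: "bij \<sigma>" and ni: "nonincr ((\<chi> i. ?lam$(\<sigma> i)) :: (real,'n) vec)"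
    using sort_exists[OF d] by blast
  have P0: "P ((\<chi> i. ?lam$(\<sigma> i)) :: (real,'n) vec)"
    unfolding P_def
  proof (intro conjI ni allI)
    fix t :: real
    have "(\<Prod>i\<in>UNIV. t - (\<chi> i. ?lam$(\<sigma> i))$i) = (\<Prod>i\<in>UNIV. t - ?lam$(\<sigma> i))" by simp
    also have "\<dots> = (\<Prod>i\<in>UNIV. t - ?lam$i)"
      using prod.reindex_bij_betw[OF bs, of "\<lambda>i. t - ?lam$i"] by simp
    finally show "det (t *\<^sub>R mat 1 - X) = (\<Prod>i\<in>UNIV. t - (\<chi> i. ?lam$(\<sigma> i))$i)"
      using cp by simp
  qed
  have uniq: "l = l'" if "P l" "P l'" for l l'
  proof -
    have "nonincr l" "nonincr l'" using that unfolding P_def by blast+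
    moreover have "\<forall>t. (\<Prod>i\<in>UNIV. t - l$i) = (\<Prod>i\<in>UNIV. t - l'$i)"
      using that unfolding P_def by metis
    ultimately show ?thesis by (rule charpoly_unique)
  qed
  have "\<exists>!l. P l"
  proof (rule ex1I)
    show "P ((\<chi> i. ?lam$(\<sigma> i)) :: (real,'n) vec)" by (rule P0)
  next
    fix l assume "P l"
    then show "l = ((\<chi> i. ?lam$(\<sigma> i)) :: (real,'n) vec)" using uniq[OF _ P0] by blast
  qed
  then have "P (THE l. P l)" by (rule theI')
  moreover have "eigvals X = (THE l. P l)" unfolding eigvals_def P_def by (rule refl)
  ultimately show ?thesis unfolding P_def by metis
qed



lemma continuous_det: "continuous_on UNIV (det :: real^'n^'n \<Rightarrow> real)"
  unfolding det_def
  by (intro continuous_intros)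

lemma continuous_charpoly_t: "continuous_on S (\<lambda>t::real. det (t *\<^sub>R mat 1 - (Y::real^'n^'n)))"
proof -
  have "continuous_on S (\<lambda>t::real. t *\<^sub>R (mat 1::real^'n^'n) - Y)"
    by (intro continuous_intros)
  then show ?thesis
    using continuous_on_compose2[OF continuous_det, of S "\<lambda>t. t *\<^sub>R mat 1 - Y"] by simp
qed

lemma isCont_charpoly_Y: "isCont (\<lambda>Y::real^'n^'n. det (t *\<^sub>R mat 1 - Y)) X"
proof -
  have "isCont det (t *\<^sub>R mat 1 - X :: real^'n^'n)"
    using continuous_det[where 'n='n] continuous_on_eq_continuous_at[OF open_UNIV] by blast
  moreover have "isCont (\<lambda>Y::real^'n^'n. t *\<^sub>R mat 1 - Y) X" by (intro continuous_intros)
  ultimately show ?thesis using isCont_o2 by blast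
qed

lemma norm_mv_le: "norm ((A::real^'n^'m) *v x) \<le> norm A * norm x"
proof -
  have row: "\<bar>(A *v x)$i\<bar> \<le> norm (A$i) * norm x" for i
  proof -
    have "(A *v x)$i = inner (A$i) x"
      by (simp add: matrix_vector_mult_def inner_vec_def)
    then show ?thesis using Cauchy_Schwarz_ineq2 by simp
  qed
  have "(norm (A *v x))^2 = (\<Sum>i\<in>UNIV. ((A *v x)$i)^2)"
    by (simp add: norm_vec_def L2_set_def real_sqrt_pow2 sum_nonneg)
  also have "\<dots> \<le> (\<Sum>i\<in>UNIV. (norm (A$i) * norm x)^2)"
    by (intro sum_mono) (metis abs_ge_zero power_mono power2_abs row)
  also have "\<dots> = (\<Sum>i\<in>UNIV. (norm (A$i))^2) * (norm x)^2"
    by (simp add: power_mult_distrib sum_distrib_right)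
  also have "\<dots> = (norm A * norm x)^2"
    by (simp add: norm_vec_def L2_set_def real_sqrt_pow2 sum_nonneg power_mult_distrib)
  finally show ?thesis
    by (meson mult_nonneg_nonneg norm_ge_zero power2_le_imp_le)
qed

lemma orth_norm_transpose:
  assumes "orthogonal_matrix (Q::real^'n^'n)"
  shows "norm (transpose Q *v u) = norm u"
proof -
  have QQ: "Q ** transpose Q = mat 1" using assms by (simp add: orthogonal_matrix_def)
  have "inner (transpose Q *v u) (transpose Q *v u) = inner u (Q *v (transpose Q *v u))"
    by (simp add: dot_lmul_matrix)
  also have "Q *v (transpose Q *v u) = u" by (simp only: matrix_vector_mul_assoc QQ matrix_vector_mul_lid)
  then have "inner u (Q *v (transpose Q *v u)) = inner u u" by simp
  finally show ?thesis by (simp add: norm_eq_sqrt_inner)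
qed

lemma det_zero_eigvec:
  fixes M :: "real^'n^'n"
  assumes "det M = 0"
  shows "\<exists>v. v \<noteq> 0 \<and> M *v v = 0"
  using assms invertible_det_nz[of M] invertible_left_inverse[of M] matrix_left_invertible_ker[of M]
  by blast

lemma eig_from_det:
  fixes Y :: "real^'n^'n"
  assumes "det (m *\<^sub>R mat 1 - Y) = 0"
  shows "\<exists>v. v \<noteq> 0 \<and> Y *v v = m *\<^sub>R v"
proof -
  obtain v where "v \<noteq> 0" "(m *\<^sub>R mat 1 - Y) *v v = 0" using det_zero_eigvec[OF assms] by blast
  moreover have "(m *\<^sub>R mat 1 - Y) *v v = m *\<^sub>R v - Y *v v"
    by (simp add: matrix_vector_mult_diff_rdistrib scaleR_matrix_vector_assoc[symmetric])
  ultimately show ?thesis by auto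
qed



lemma norm_sq_vec: "(norm (x::real^'n))^2 = (\<Sum>i\<in>UNIV. (x$i)^2)"
  by (simp add: norm_vec_def L2_set_def real_sqrt_pow2 sum_nonneg)

lemma mat_diff_ldistrib: "(A::real^'n^'m) ** (B - C) = A ** B - A ** (C::real^'k^'n)"
  by (simp add: matrix_matrix_mult_def vec_eq_iff sum_subtractf algebra_simps)

lemma mat_diff_rdistrib: "((B::real^'n^'m) - C) ** (A::real^'k^'n) = B ** A - C ** A"
  by (simp add: matrix_matrix_mult_def vec_eq_iff sum_subtractf algebra_simps)

lemma mat_scaleR_l: "(A::real^'n^'m) ** (c *\<^sub>R B) = c *\<^sub>R (A ** (B::real^'k^'n))"
  by (simp add: matrix_matrix_mult_def vec_eq_iff sum_distrib_left algebra_simps)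

lemma mat_scaleR_r: "(c *\<^sub>R (B::real^'n^'m)) ** (A::real^'k^'n) = c *\<^sub>R (B ** A)"
  by (simp add: matrix_matrix_mult_def vec_eq_iff sum_distrib_left algebra_simps)

lemma QtX:
  assumes oQ: "orthogonal_matrix (Q::real^'n^'n)" and X: "X = Q ** Diag lam ** transpose Q"
  shows "transpose Q ** X = Diag lam ** transpose Q"
proof -
  have "transpose Q ** Q = mat 1" using oQ by (simp add: orthogonal_matrix_def)
  then show ?thesis unfolding X by (simp add: matrix_mul_assoc)
qed

lemma cpX:
  assumes oQ: "orthogonal_matrix (Q::real^'n^'n)" and X: "X = Q ** Diag lam ** transpose Q"
  shows "det (t *\<^sub>R mat 1 - X) = (\<Prod>i\<in>UNIV. t - lam$i)"
proof -
  have QtQ: "transpose Q ** Q = mat 1" using oQ by (simp add: orthogonal_matrix_def)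
  have dQ: "det (transpose Q) * det Q = 1"
    using det_mul[of "transpose Q" Q] QtQ by simp
  have "transpose Q ** (t *\<^sub>R mat 1 - X) ** Q = t *\<^sub>R mat 1 - Diag lam"
  proof -
    have "transpose Q ** (t *\<^sub>R mat 1 - X) ** Q = t *\<^sub>R (transpose Q ** Q) - (transpose Q ** X) ** Q"
      by (simp add: mat_diff_ldistrib mat_diff_rdistrib mat_scaleR_l mat_scaleR_r)
    also have "\<dots> = t *\<^sub>R mat 1 - Diag lam"
      using QtX[OF oQ X] QtQ by (simp add: matrix_mul_assoc[symmetric])
    finally show ?thesis .
  qed
  then have "det (t *\<^sub>R mat 1 - Diag lam) = det (transpose Q) * det (t *\<^sub>R mat 1 - X) * det Q"
    by (metis det_mul)
  also have "\<dots> = det (t *\<^sub>R mat 1 - X)" using dQ by (simp add: algebra_simps)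
  finally have 1: "det (t *\<^sub>R mat 1 - X) = det (t *\<^sub>R mat 1 - Diag lam)" ..
  have "det (t *\<^sub>R mat 1 - Diag lam) = (\<Prod>i\<in>UNIV. (t *\<^sub>R mat 1 - Diag lam)$i$i)"
    by (rule det_diagonal) (simp add: Diag_def mat_def)
  also have "\<dots> = (\<Prod>i\<in>UNIV. t - lam$i)" by (simp add: Diag_def mat_def)
  finally show ?thesis using 1 by simp
qed



lemma col_bound:
  fixes Q X Y :: "real^'n^'n" and lam u :: "real^'n"
  assumes oQ: "orthogonal_matrix Q" and QX: "transpose Q ** X = Diag lam ** transpose Q"
    and nu: "norm u = 1" and eu: "Y *v u = m *\<^sub>R u" and sg: "0 \<le> inner (column i Q) u"
    and ep: "\<epsilon> > 0" and gap: "\<forall>j. j \<noteq> i \<longrightarrow> \<epsilon> \<le> \<bar>m - lam$j\<bar>"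
  shows "(norm (u - column i Q))^2 \<le> 2 * (norm (Y - X))^2 / \<epsilon>^2"
proof -
  define w where "w = transpose Q *v u"
  have wj: "w$j = inner (column j Q) u" for j
    by (simp add: w_def vector_matrix_mult_def inner_vec_def column_def mult.commute)
  have nw: "norm w = 1" using orth_norm_transpose[OF oQ] nu by (simp add: w_def)
  have sumw: "(\<Sum>j\<in>UNIV. (w$j)^2) = 1" using norm_sq_vec[of w] nw by simp
  have z: "transpose Q *v ((Y - X) *v u) = m *\<^sub>R w - Diag lam *v w"
  proof -
    have "transpose Q *v ((Y - X) *v u) = transpose Q *v (Y *v u) - transpose Q *v (X *v u)"
      by (simp only: matrix_vector_mult_diff_rdistrib matrix_vector_mult_diff_distrib)
    also have "transpose Q *v (Y *v u) = m *\<^sub>R w"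
      by (simp only: eu w_def matrix_vector_mult_scaleR)
    also have "transpose Q *v (X *v u) = Diag lam *v w"
      by (simp only: w_def matrix_vector_mul_assoc QX)
    finally show ?thesis .
  qed
  have Dw: "(Diag lam *v w)$j = lam$j * w$j" for j
  proof -
    have "(Diag lam *v w)$j = (\<Sum>k\<in>UNIV. (if j = k then lam$j else 0) * w$k)"
      by (simp add: Diag_def matrix_vector_mult_def)
    also have "\<dots> = (\<Sum>k\<in>UNIV. if j = k then lam$j * w$k else 0)"
      by (rule sum.cong) auto
    also have "\<dots> = lam$j * w$j" by simp
    finally show ?thesis .
  qed
  have zj: "(m *\<^sub>R w - Diag lam *v w)$j = (m - lam$j) * w$j" for j
    using Dw[of j] by (simp add: algebra_simps)
  have "norm (transpose Q *v ((Y - X) *v u)) = norm ((Y - X) *v u)"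
    by (rule orth_norm_transpose[OF oQ])
  also have "\<dots> \<le> norm (Y - X)" using norm_mv_le[of "Y - X" u] nu by simp
  finally have "norm (m *\<^sub>R w - Diag lam *v w) \<le> norm (Y - X)" using z by simp
  then have "(norm (m *\<^sub>R w - Diag lam *v w))^2 \<le> (norm (Y - X))^2"
    by (simp add: power_mono)
  then have E: "(\<Sum>j\<in>UNIV. ((m - lam$j) * w$j)^2) \<le> (norm (Y - X))^2"
    using norm_sq_vec[of "m *\<^sub>R w - Diag lam *v w"] by (simp only: zj)
  define S where "S = (\<Sum>j\<in>UNIV-{i}. (w$j)^2)"
  have "\<epsilon>^2 * S = (\<Sum>j\<in>UNIV-{i}. \<epsilon>^2 * (w$j)^2)" by (simp add: S_def sum_distrib_left)
  also have "\<dots> \<le> (\<Sum>j\<in>UNIV-{i}. ((m - lam$j) * w$j)^2)"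
  proof (rule sum_mono)
    fix j assume "j \<in> UNIV - {i}"
    then have "\<epsilon> \<le> \<bar>m - lam$j\<bar>" using gap by auto
    then have "\<epsilon>^2 \<le> (m - lam$j)^2" using ep
      by (metis abs_of_pos power2_abs power_mono less_imp_le)
    then show "\<epsilon>^2 * (w$j)^2 \<le> ((m - lam$j) * w$j)^2"
      by (simp add: power_mult_distrib mult_right_mono)
  qed
  also have "\<dots> \<le> (\<Sum>j\<in>UNIV. ((m - lam$j) * w$j)^2)"
    by (rule sum_mono2) auto
  finally have eS: "\<epsilon>^2 * S \<le> (norm (Y - X))^2" using E by linarith
  have S0: "S \<ge> 0" by (simp add: S_def sum_nonneg)
  have wi: "(w$i)^2 = 1 - S"
    using sumw sum.remove[of UNIV i "\<lambda>j. (w$j)^2"] by (simp add: S_def)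
  have wi0: "w$i \<ge> 0" using sg wj by simp
  have wi1: "w$i \<le> 1"
  proof (rule ccontr)
    assume "\<not> w$i \<le> 1"
    then have "1 < w$i" by simp
    then have "1 < (w$i)^2" by (metis one_less_power zero_less_numeral pos2)
    then show False using wi S0 by linarith
  qed
  have wsq: "(w$i)^2 \<le> w$i" using wi0 wi1 by (simp add: power2_eq_square mult_left_le)
  have nq: "norm (column i Q) = 1" using oQ orthogonal_matrix_orthonormal_columns by blast
  have "(norm (u - column i Q))^2 = (norm u)^2 + (norm (column i Q))^2 - 2 * inner (column i Q) u"
    by (simp add: power2_norm_eq_inner inner_diff_left inner_diff_right inner_commute)
  also have "\<dots> = 2 - 2 * w$i" using nu nq wj by simp
  also have "\<dots> \<le> 2 * S" using wsq wi by linarith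
  also have "\<dots> \<le> 2 * (norm (Y - X))^2 / \<epsilon>^2"
    using eS ep by (simp add: field_simps)
  finally show ?thesis .
qed



lemma frob_norm_eq: "frob_norm (A::real^'n^'n) = norm A"
  unfolding frob_norm_def norm_vec_def L2_set_def
  by (simp add: sum_nonneg)

lemma norm_sq_entries: "(norm (A::real^'n^'m))^2 = (\<Sum>i\<in>UNIV. \<Sum>j\<in>UNIV. (A$i$j)^2)"
  by (simp add: norm_vec_def L2_set_def sum_nonneg)

lemma sym_inner:
  assumes "sym_mat (Y::real^'n^'n)"
  shows "inner (Y *v x) y = inner x (Y *v y)"
proof -
  have "Y *v x = x v* Y"
    using assms transpose_matrix_vector[of Y x] unfolding sym_mat_def by simp
  then show ?thesis by (simp add: dot_lmul_matrix)
qed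

lemma IVT_sign:
  fixes h :: "real \<Rightarrow> real"
  assumes "continuous_on {a..b} h" "a \<le> b" "h b * h a < 0"
  shows "\<exists>x. a \<le> x \<and> x \<le> b \<and> h x = 0"
proof (cases "h a \<le> 0")
  case True
  then have "0 \<le> h b" using assms(3) by (smt (verit) mult_nonpos_nonpos)
  then show ?thesis using IVT'[of h a 0 b] True assms by simp
next
  case False
  then have "h b \<le> 0" using assms(3) by (smt (verit) mult_pos_pos)
  then show ?thesis using IVT2'[of h b 0 a] False assms by simp
qed

lemma unit_eig:
  fixes Y :: "real^'n^'n"
  assumes "det (mu *\<^sub>R mat 1 - Y) = 0"
  shows "\<exists>u. norm u = 1 \<and> Y *v u = mu *\<^sub>R u \<and> 0 \<le> inner q u"
proof -
  obtain v where v0: "v \<noteq> 0" and ev: "Y *v v = mu *\<^sub>R v" using eig_from_det[OF assms] by blast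
  define s where "s = (if 0 \<le> inner q v then 1 else -1) / norm v"
  have ns: "\<bar>s\<bar> * norm v = 1" using v0 by (simp add: s_def)
  have "norm (s *\<^sub>R v) = 1" using ns by simp
  moreover have "Y *v (s *\<^sub>R v) = mu *\<^sub>R (s *\<^sub>R v)"
    by (simp add: matrix_vector_mult_scaleR ev)
  moreover have "0 \<le> inner q (s *\<^sub>R v)"
    using v0 by (simp add: s_def divide_nonneg_pos)
  ultimately show ?thesis by blast
qed



lemma main_perturb:
  fixes X Q :: "real^('n::{finite,linorder})^('n::{finite,linorder})" and lam :: "real^('n::{finite,linorder})" and d :: real
  assumes oQ: "orthogonal_matrix Q" and X: "X = Q ** Diag lam ** transpose Q"
    and dec: "\<forall>i j. i < j \<longrightarrow> lam$j < lam$i" and dp: "d > 0"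
  shows "\<exists>d'>0. sym_ball X d' \<subseteq> spec_ball Q lam d"
proof -
  define n where "n = real CARD('n)"
  have n1: "n \<ge> 1" unfolding n_def by (simp add: Suc_leI)
  have neq: "lam$i \<noteq> lam$j" if "i \<noteq> j" for i j
    using dec that by (metis less_irrefl linorder_neqE)
  define G where "G = (\<lambda>(i,j). \<bar>lam$i - lam$j\<bar>) ` {(i,j). i \<noteq> j}"
  have fG: "finite G" unfolding G_def by simp
  have Gpos: "\<forall>x\<in>G. 0 < x" unfolding G_def using neq by auto
  define g where "g = Min (insert 1 G)"
  have g0: "g > 0" unfolding g_def using fG Gpos by simp
  have gle: "g \<le> \<bar>lam$i - lam$j\<bar>" if "i \<noteq> j" for i j
  proof -
    have "\<bar>lam$i - lam$j\<bar> \<in> G" unfolding G_def using that by force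
    then show ?thesis unfolding g_def using fG by simp
  qed
  define \<epsilon> where "\<epsilon> = min (g/4) (d/n)"
  have ep: "\<epsilon> > 0" unfolding \<epsilon>_def using g0 dp n1 by simp
  have gap: "4 * \<epsilon> \<le> \<bar>lam$i - lam$j\<bar>" if "i \<noteq> j" for i j
    using gle[OF that] unfolding \<epsilon>_def by linarith
  have epn: "n * \<epsilon> \<le> d"
  proof -
    have "\<epsilon> \<le> d / n" unfolding \<epsilon>_def by simp
    then show ?thesis using n1 by (simp add: field_simps)
  qed
  define F where "F i Y = det ((lam$i + \<epsilon>) *\<^sub>R mat 1 - Y) * det ((lam$i - \<epsilon>) *\<^sub>R mat 1 - Y)"
    for i and Y :: "((real,'n) vec,'n) vec"
  have FX: "F i X < 0" for i
  proof -
    have "F i X = (\<Prod>j\<in>UNIV. lam$i + \<epsilon> - lam$j) * (\<Prod>j\<in>UNIV. lam$i - \<epsilon> - lam$j)"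
      unfolding F_def using cpX[OF oQ X] by simp
    also have "\<dots> = (\<Prod>j\<in>UNIV. (lam$i + \<epsilon> - lam$j) * (lam$i - \<epsilon> - lam$j))"
      by (simp add: prod.distrib)
    also have "\<dots> = ((lam$i + \<epsilon> - lam$i) * (lam$i - \<epsilon> - lam$i)) *
        (\<Prod>j\<in>UNIV-{i}. (lam$i + \<epsilon> - lam$j) * (lam$i - \<epsilon> - lam$j))"
      using prod.remove[of UNIV i "\<lambda>j. (lam$i + \<epsilon> - lam$j) * (lam$i - \<epsilon> - lam$j)"]
      by (simp only: finite UNIV_I)
    also have "\<dots> < 0"
    proof (rule mult_neg_pos)
      show "(lam$i + \<epsilon> - lam$i) * (lam$i - \<epsilon> - lam$i) < 0" using ep by simp
      show "0 < (\<Prod>j\<in>UNIV-{i}. (lam$i + \<epsilon> - lam$j) * (lam$i - \<epsilon> - lam$j))"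
      proof (rule prod_pos)
        fix j assume "j \<in> UNIV - {i}"
        then have "4 * \<epsilon> \<le> \<bar>lam$i - lam$j\<bar>" using gap by auto
        then have "\<epsilon> < \<bar>lam$i - lam$j\<bar>" using ep by linarith
        then have "\<epsilon>^2 < \<bar>lam$i - lam$j\<bar>^2" using ep by (intro power_strict_mono) auto
        then have "\<epsilon>^2 < (lam$i - lam$j)^2" by simp
        moreover have "(lam$i + \<epsilon> - lam$j) * (lam$i - \<epsilon> - lam$j) = (lam$i - lam$j)^2 - \<epsilon>^2"
          by (simp add: power2_eq_square algebra_simps)
        ultimately show "0 < (lam$i + \<epsilon> - lam$j) * (lam$i - \<epsilon> - lam$j)" by simp
      qed
    qed
    finally show ?thesis .
  qed
  have ev: "eventually (\<lambda>Y. \<forall>i. F i Y < 0) (at X)"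
  proof (rule eventually_all_finite)
    fix i
    have "isCont (F i) X"
      unfolding F_def[abs_def] using isCont_charpoly_Y by (intro isCont_mult) auto
    then have "(F i \<longlongrightarrow> F i X) (at X)" by (simp add: isCont_def)
    then show "eventually (\<lambda>Y. F i Y < 0) (at X)" using order_tendstoD(2) FX by blast
  qed
  then obtain d0 where d0: "d0 > 0" and d0P: "\<forall>Y. Y \<noteq> X \<and> dist Y X < d0 \<longrightarrow> (\<forall>i. F i Y < 0)"
    unfolding eventually_at by auto
  have FY: "\<forall>i. F i Y < 0" if "dist Y X < d0" for Y
    using d0P that FX by (cases "Y = X") auto
  define d' where "d' = min (d0/2) (d * \<epsilon> / (2 * n))"
  have d'0: "d' > 0" unfolding d'_def using d0 dp ep n1 by simp
  show ?thesis
  proof (intro exI conjI subsetI)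
    show "d' > 0" by (rule d'0)
    fix Y assume "Y \<in> sym_ball X d'"
    then have symY: "sym_mat Y" and nYX: "norm (Y - X) \<le> d'"
      unfolding sym_ball_def by (auto simp: frob_norm_eq)
    have "dist Y X < d0" using nYX d0 unfolding d'_def by (simp add: dist_norm)
    then have FYi: "F i Y < 0" for i using FY by blast
    have eig: "\<exists>mu u. lam$i - \<epsilon> \<le> mu \<and> mu \<le> lam$i + \<epsilon> \<and> norm u = 1 \<and> Y *v u = mu *\<^sub>R u
        \<and> 0 \<le> inner (column i Q) u" for i
    proof -
      have "\<exists>x. lam$i - \<epsilon> \<le> x \<and> x \<le> lam$i + \<epsilon> \<and> det (x *\<^sub>R mat 1 - Y) = 0"
        using IVT_sign[OF continuous_charpoly_t, of "lam$i - \<epsilon>" "lam$i + \<epsilon>" Y] ep FYi[of i]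
        by (simp add: F_def)
      then obtain x where "lam$i - \<epsilon> \<le> x" "x \<le> lam$i + \<epsilon>" "det (x *\<^sub>R mat 1 - Y) = 0" by blast
      then show ?thesis using unit_eig[of x Y "column i Q"] by blast
    qed
    then obtain mu U where
      muI: "\<And>i. lam$i - \<epsilon> \<le> mu i" "\<And>i. mu i \<le> lam$i + \<epsilon>" and
      nU: "\<And>i. norm (U i) = 1" and eU: "\<And>i. Y *v U i = mu i *\<^sub>R U i" and
      sU: "\<And>i. 0 \<le> inner (column i Q) (U i)"
      by metis
    define m where "m = (\<chi> i. mu i)"
    define Qb where "Qb = (\<chi> r c. U c $ r)"
    have colQb: "column c Qb = U c" for c
      by (simp add: Qb_def column_def vec_eq_iff)
    have mudec: "mu j < mu i" if "i < j" for i j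
    proof -
      have "i \<noteq> j" using that by simp
      then have "4 * \<epsilon> \<le> \<bar>lam$i - lam$j\<bar>" by (rule gap)
      moreover have "lam$j < lam$i" using dec that by blast
      ultimately show ?thesis using muI[of i] muI(2)[of j] ep by linarith
    qed
    have muneq: "mu i \<noteq> mu j" if "i \<noteq> j" for i j
      using mudec that by (metis less_irrefl linorder_neqE)
    have orthU: "inner (U i) (U j) = 0" if "i \<noteq> j" for i j
    proof -
      have "mu i * inner (U i) (U j) = inner (Y *v U i) (U j)" by (simp add: eU)
      also have "\<dots> = inner (U i) (Y *v U j)" by (rule sym_inner[OF symY])
      also have "\<dots> = mu j * inner (U i) (U j)" by (simp add: eU)
      finally have "(mu i - mu j) * inner (U i) (U j) = 0" by (simp add: algebra_simps)
      then show ?thesis using muneq[OF that] by simp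
    qed
    have oQb: "orthogonal_matrix Qb"
      unfolding orthogonal_matrix_orthonormal_columns colQb orthogonal_def
      using nU orthU by blast
    have YQb: "Y ** Qb = Qb ** Diag m"
    proof -
      have "(Y ** Qb)$r$c = (Qb ** Diag m)$r$c" for r c
      proof -
        have "(Y ** Qb)$r$c = (Y *v U c)$r"
          by (simp add: matrix_matrix_mult_def matrix_vector_mult_def Qb_def)
        also have "\<dots> = mu c * U c $ r" by (simp add: eU)
        also have "\<dots> = (\<Sum>k\<in>UNIV. U k $ r * (if k = c then m$k else 0))"
        proof -
          have "(\<Sum>k\<in>UNIV. U k $ r * (if k = c then m$k else 0)) = (\<Sum>k\<in>UNIV. if k = c then U c $ r * mu c else 0)"
            by (rule sum.cong) (auto simp: m_def)
          then show ?thesis by simp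
        qed
        also have "\<dots> = (Qb ** Diag m)$r$c"
          by (simp add: matrix_matrix_mult_def Qb_def Diag_def)
        finally show ?thesis .
      qed
      then show ?thesis by (simp add: vec_eq_iff)
    qed
    have Ydec: "Y = Qb ** Diag m ** transpose Qb"
    proof -
      have "Qb ** transpose Qb = mat 1" using oQb by (simp add: orthogonal_matrix_def)
      then have "Y = Y ** (Qb ** transpose Qb)" by simp
      also have "\<dots> = Qb ** Diag m ** transpose Qb" by (simp add: matrix_mul_assoc YQb)
      finally show ?thesis .
    qed
    have nim: "nonincr m"
      unfolding nonincr_def m_def using mudec by (auto simp: order_le_less)
    have nml: "norm (m - lam) \<le> d"
    proof -
      have "norm (m - lam) \<le> (\<Sum>i\<in>UNIV. \<bar>(m - lam)$i\<bar>)" by (rule norm_le_l1_cart)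
      also have "\<dots> \<le> (\<Sum>i\<in>(UNIV::'n set). \<epsilon>)"
      proof (rule sum_mono)
        fix i show "\<bar>(m - lam)$i\<bar> \<le> \<epsilon>" using muI[of i] muI(2)[of i] by (simp add: m_def)
      qed
      also have "\<dots> = n * \<epsilon>" by (simp add: n_def)
      finally show ?thesis using epn by simp
    qed
    have colb: "(norm (U c - column c Q))^2 \<le> 2 * (norm (Y - X))^2 / \<epsilon>^2" for c
    proof (rule col_bound[OF oQ QtX[OF oQ X] nU eU sU ep])
      show "\<forall>j. j \<noteq> c \<longrightarrow> \<epsilon> \<le> \<bar>mu c - lam$j\<bar>"
      proof (intro allI impI)
        fix j assume "j \<noteq> c"
        then have "4 * \<epsilon> \<le> \<bar>lam$c - lam$j\<bar>" using gap by metis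
        then show "\<epsilon> \<le> \<bar>mu c - lam$j\<bar>" using muI[of c] muI(2)[of c] ep by linarith
      qed
    qed
    have nQ: "norm (Qb - Q) \<le> d"
    proof -
      have "(norm (Qb - Q))^2 = (\<Sum>r\<in>UNIV. \<Sum>c\<in>UNIV. ((Qb - Q)$r$c)^2)" by (rule norm_sq_entries)
      also have "\<dots> = (\<Sum>c\<in>UNIV. \<Sum>r\<in>UNIV. ((Qb - Q)$r$c)^2)" by (rule sum.swap)
      also have "\<dots> = (\<Sum>c\<in>UNIV. (norm (U c - column c Q))^2)"
        by (simp add: norm_sq_vec Qb_def column_def)
      also have "\<dots> \<le> (\<Sum>c\<in>(UNIV::'n set). 2 * (norm (Y - X))^2 / \<epsilon>^2)"
        by (rule sum_mono) (rule colb)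
      also have "\<dots> = n * (2 * (norm (Y - X))^2 / \<epsilon>^2)" by (simp add: n_def)
      also have "\<dots> \<le> d^2"
      proof -
        have "norm (Y - X) \<le> d * \<epsilon> / (2 * n)" using nYX unfolding d'_def by simp
        then have "norm (Y - X) * (2 * n) \<le> d * \<epsilon>" using n1 by (simp add: field_simps)
        then have "(norm (Y - X) * (2 * n))^2 \<le> (d * \<epsilon>)^2"
          using n1 by (intro power_mono) auto
        then have A: "4 * n^2 * (norm (Y - X))^2 \<le> d^2 * \<epsilon>^2"
          by (simp add: power_mult_distrib mult.commute mult.left_commute)
        have "n * (2 * (norm (Y - X))^2) \<le> 4 * n^2 * (norm (Y - X))^2"
        proof -
          have "n * 1 \<le> n * n" using n1 by (intro mult_left_mono) auto
          then have "2 * n \<le> 4 * n^2" using n1 by (simp add: power2_eq_square)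
          then have "(2 * n) * (norm (Y - X))^2 \<le> (4 * n^2) * (norm (Y - X))^2"
            by (intro mult_right_mono) auto
          then show ?thesis by (simp add: mult.assoc mult.left_commute)
        qed
        then have "n * (2 * (norm (Y - X))^2) \<le> d^2 * \<epsilon>^2" using A by linarith
        then show ?thesis using ep by (simp add: field_simps)
      qed
      finally have "(norm (Qb - Q))^2 \<le> d^2" .
      then show ?thesis using dp power2_le_imp_le[of "norm (Qb - Q)" d] by simp
    qed
    show "Y \<in> spec_ball Q lam d"
    proof -
      have "frob_norm (Qb - Q) \<le> d" using nQ by (simp only: frob_norm_eq)
      then show ?thesis
        unfolding spec_ball_def using Ydec nml oQb nim by blast
    qed
  qed
qed


theorem lemma3:
  fixes X Qx :: "real^('n::{finite,linorder})^('n::{finite,linorder})" and \<delta>' :: real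
  assumes "sym_mat X"
    and "\<forall>i j. i \<noteq> j \<longrightarrow> eigvals X $ i \<noteq> eigvals X $ j"
    and "\<delta>' > 0"
    and "orthogonal_matrix Qx"
    and "X = Qx ** Diag (eigvals X) ** transpose Qx"
  shows "\<exists>\<delta>''>0. sym_ball X \<delta>'' \<subseteq> spec_ball Qx (eigvals X) \<delta>'"
proof -
  have cp: "\<forall>t. det (t *\<^sub>R mat 1 - X) = (\<Prod>i\<in>UNIV. t - eigvals X $ i)"
    using cpX[OF assms(4) assms(5)] by blast
  have ni: "nonincr (eigvals X)" by (rule eigvals_nonincr[OF assms(2) cp])
  have dec: "\<forall>i j. i < j \<longrightarrow> eigvals X $ j < eigvals X $ i"
  proof (intro allI impI)
    fix i j :: 'n assume "i < j"
    then have "eigvals X $ j \<le> eigvals X $ i" using ni unfolding nonincr_def by simp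
    moreover have "eigvals X $ j \<noteq> eigvals X $ i" using assms(2) \<open>i < j\<close> by simp
    ultimately show "eigvals X $ j < eigvals X $ i" by simp
  qed
  show ?thesis by (rule main_perturb[OF assms(4) assms(5) dec assms(3)])
qed

end
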